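(* Consider the speed scaling model under Assumption A1 with cost $c(x,u)=x+\tfrac12u^2$, let $K^*(x)=\alpha x+\tfrac13[(2x+\alpha^2)^{3/2}-\alpha^3]$, let $\mathcal{E}_B(x)=\min_{0\le u\le x}\bigl(c(x,u)+\mathsf{E}[K^*(x-u+A(1))]-K^*(x)\bigr)$ be its Bellman error, and let $\phi^{K^*}$ be the $(c,K^* )$-myopic policy (a minimizer in this expression). With $\tau_0=\min\{t\ge1:X(t)=0\}$, there exist constants $b_1,b_2$ such that for all $x\ge0$, \[ \mathsf{E}^{\phi^{K^*}}_x\Bigl[\sum_{t=0}^{\tau_0-1}\mathcal{E}_B(X(t))\Bigr]\le b_1x+b_2, \] where $\mathsf{E}^{\phi^{K^*}}_x$ is expectation for the chain started at $x$ under the stationary policy $\phi^{K^*}$.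
   Context: Speed scaling MDP: $X(t+1)=X(t)-U(t)+A(t+1)$, $t\ge0$, with $X(t)\in\mathbb{R}_+$ and $0\le U(t)\le X(t)$. Assumption A1: the arrival process $A$ is i.i.d., its marginal distribution is supported on $\mathbb{R}_+$ with finite mean $\alpha>0$, $\mathsf{P}\{A(1)=0\}>0$, and there is $N>0$ with $\mathsf{P}\{A(1)<N\}=1$. *)

theory Defs
  imports "HOL-Probability.Probability"
begin

text \<open>Arrival law: mu is the marginal distribution of A(1), a probability measure on the reals.
  The i.i.d. arrival sequence A(1), A(2), ... is modelled by a stream w drawn from
  stream_space mu, with snth w t = A(t+1).\<close>

definition arr_mean :: "real measure \<Rightarrow> real" where
  "arr_mean mu = (\<integral>a. a \<partial>mu)"

definition cost :: "real \<Rightarrow> real \<Rightarrow> real" where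
  "cost x u = x + (1/2) * u\<^sup>2"

definition Kstar :: "real \<Rightarrow> real \<Rightarrow> real" where
  "Kstar \<alpha> x = \<alpha> * x + (1/3) * ((2 * x + \<alpha>\<^sup>2) powr (3/2) - \<alpha> ^ 3)"

definition bellman_obj :: "real measure \<Rightarrow> real \<Rightarrow> real \<Rightarrow> real" where
  "bellman_obj mu x u =
     cost x u + (\<integral>a. Kstar (arr_mean mu) (x - u + a) \<partial>mu) - Kstar (arr_mean mu) x"

definition bellman_err :: "real measure \<Rightarrow> real \<Rightarrow> real" where
  "bellman_err mu x = Inf (bellman_obj mu x ` {0..x})"

fun Xpath :: "(real \<Rightarrow> real) \<Rightarrow> real \<Rightarrow> real stream \<Rightarrow> nat \<Rightarrow> real" where
  "Xpath phi x w 0 = x"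
| "Xpath phi x w (Suc t) = Xpath phi x w t - phi (Xpath phi x w t) + snth w t"

definition tau0 :: "(real \<Rightarrow> real) \<Rightarrow> real \<Rightarrow> real stream \<Rightarrow> enat" where
  "tau0 phi x w =
     (if \<exists>t\<ge>1. Xpath phi x w t = 0
      then enat (LEAST t. t \<ge> 1 \<and> Xpath phi x w t = 0) else \<infinity>)"

end

theory Submission
  imports Defs
begin



definition Kd :: "real \<Rightarrow> real \<Rightarrow> real" where
  "Kd \<alpha> y = \<alpha> + sqrt (2*y + \<alpha>\<^sup>2)"

lemma powr32: "(s::real) \<ge> 0 \<Longrightarrow> s powr (3/2) = s * sqrt s"
proof -
  assume s: "s \<ge> 0"
  have "s powr (3/2) = s powr (1 + 1/2)" by simp
  also have "\<dots> = s powr 1 * s powr (1/2)" by (rule powr_add)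
  also have "\<dots> = s * sqrt s" using s by (simp add: powr_half_sqrt)
  finally show ?thesis .
qed

lemma Kstar_sq:
  assumes "2*y + \<alpha>\<^sup>2 \<ge> 0"
  shows "Kstar \<alpha> y = \<alpha>*y + (1/3)*((2*y+\<alpha>\<^sup>2) * sqrt (2*y+\<alpha>\<^sup>2) - \<alpha>^3)"
  using assms by (simp add: Kstar_def powr32)

lemma tangent:
  fixes \<alpha> y z :: real
  assumes a: "\<alpha> > 0" and y: "y \<ge> 0" and z: "z \<ge> 0"
  shows "0 \<le> Kstar \<alpha> z - Kstar \<alpha> y - Kd \<alpha> y * (z - y)"
    and "(Kstar \<alpha> z - Kstar \<alpha> y - Kd \<alpha> y * (z - y)) * sqrt (2*y+\<alpha>\<^sup>2) \<le> (4/3) * (z-y)\<^sup>2"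
proof -
  define p where "p = sqrt (2*y+\<alpha>\<^sup>2)"
  define q where "q = sqrt (2*z+\<alpha>\<^sup>2)"
  have p2: "p\<^sup>2 = 2*y+\<alpha>\<^sup>2" unfolding p_def using y by (simp add: add_nonneg_nonneg)
  have q2: "q\<^sup>2 = 2*z+\<alpha>\<^sup>2" unfolding q_def using z by (simp add: add_nonneg_nonneg)
  have pp: "p > 0" unfolding p_def using a y by (simp add: add_nonneg_pos)
  have qp: "q > 0" unfolding q_def using a z by (simp add: add_nonneg_pos)
  have R: "Kstar \<alpha> z - Kstar \<alpha> y - Kd \<alpha> y * (z - y) = (q-p)^2*(2*q+p)/6"
  proof -
    have "Kstar \<alpha> z - Kstar \<alpha> y - Kd \<alpha> y * (z - y)
        = (q\<^sup>2*q - p\<^sup>2*p)/3 - p*(z-y)"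
    proof -
      have Kz: "Kstar \<alpha> z = \<alpha>*z + (1/3)*(q\<^sup>2*q - \<alpha>^3)"
        using Kstar_sq[of z \<alpha>] q2 z unfolding q_def by (simp add: add_nonneg_nonneg)
      have Ky: "Kstar \<alpha> y = \<alpha>*y + (1/3)*(p\<^sup>2*p - \<alpha>^3)"
        using Kstar_sq[of y \<alpha>] p2 y unfolding p_def by (simp add: add_nonneg_nonneg)
      have Kdy: "Kd \<alpha> y = \<alpha> + p" unfolding Kd_def p_def ..
      show ?thesis unfolding Kz Ky Kdy by (simp add: field_simps)
    qed
    also have "\<dots> = (q-p)^2*(2*q+p)/6"
    proof -
      have zy: "z - y = (q\<^sup>2 - p\<^sup>2)/2" using p2 q2 by simp
      have "(q\<^sup>2*q - p\<^sup>2*p)/3 - p*(z-y) = (q\<^sup>2*q - p\<^sup>2*p)/3 - p*((q\<^sup>2 - p\<^sup>2)/2)"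
        by (simp only: zy)
      also have "\<dots> = (q-p)^2*(2*q+p)/6" by (simp add: power2_eq_square field_simps)
      finally show ?thesis . 
    qed
    finally show ?thesis .
  qed
  show "0 \<le> Kstar \<alpha> z - Kstar \<alpha> y - Kd \<alpha> y * (z - y)"
    unfolding R using pp qp by simp
  have zy: "(z-y)\<^sup>2 = (q-p)^2*(q+p)^2/4"
  proof -
    have e: "z - y = (q - p)*(q+p)/2" using p2 q2 by (simp add: power2_eq_square algebra_simps)
    show ?thesis unfolding e by (simp add: power2_eq_square field_simps)
  qed
  have "(2*q+p)*p \<le> 2*(q+p)^2" using pp qp by (simp add: power2_eq_square algebra_simps)
  hence "(q-p)^2 * ((2*q+p)*p) \<le> (q-p)^2 * (2*(q+p)^2)"
    by (rule mult_left_mono) simp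
  thus "(Kstar \<alpha> z - Kstar \<alpha> y - Kd \<alpha> y * (z - y)) * sqrt (2*y+\<alpha>\<^sup>2) \<le> (4/3) * (z-y)\<^sup>2"
    unfolding R zy p_def[symmetric] by (simp add: algebra_simps)
qed

locale SS = prob_space mu for mu :: "real measure" +
  fixes N :: real
  assumes sets_mu: "sets mu = sets borel"
    and nonneg: "AE a in mu. 0 \<le> a"
    and Npos: "N > 0"
    and bounded: "AE a in mu. a < N"
    and integ: "integrable mu (\<lambda>a. a)"
    and mean_pos: "arr_mean mu > 0"
begin

abbreviation "al \<equiv> arr_mean mu"

lemma space_mu: "space mu = UNIV"
  using sets_eq_imp_space_eq[OF sets_mu] by simp

lemma meas_K: "(\<lambda>a. Kstar al (c + a)) \<in> borel_measurable mu"
  unfolding measurable_cong_sets[OF sets_mu refl] Kstar_def by measurable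

lemma Rbound:
  assumes y: "y \<ge> 0" and u: "0 \<le> u" "u \<le> y"
  shows "AE a in mu. 0 \<le> Kstar al (y-u+a) - Kstar al y - Kd al y * (a - u) \<and>
     Kstar al (y-u+a) - Kstar al y - Kd al y * (a - u) \<le> (4/3)*(N+u)\<^sup>2 / sqrt (2*y+al\<^sup>2)"
  using nonneg bounded
proof eventually_elim
  case (elim a)
  define R where "R = Kstar al (y-u+a) - Kstar al y - Kd al y * (a - u)"
  have z: "y - u + a \<ge> 0" using elim u by simp
  have t1: "0 \<le> R" using tangent(1)[OF mean_pos y z] unfolding R_def by simp
  have t2: "R * sqrt (2*y+al\<^sup>2) \<le> (4/3)*(a-u)\<^sup>2"
    using tangent(2)[OF mean_pos y z] unfolding R_def by simp
  have pp: "sqrt (2*y+al\<^sup>2) > 0" using mean_pos y by (simp add: add_nonneg_pos)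
  have "(a-u)\<^sup>2 \<le> (N+u)\<^sup>2"
  proof -
    have "(N+u)\<^sup>2 - (a-u)\<^sup>2 = (N+a)*(N+2*u-a)" by (simp add: power2_eq_square algebra_simps)
    moreover have "(N+a)*(N+2*u-a) \<ge> 0" using elim u Npos by simp
    ultimately show ?thesis by linarith
  qed
  hence "R * sqrt (2*y+al\<^sup>2) \<le> (4/3)*(N+u)\<^sup>2" using t2 by linarith
  hence "R \<le> (4/3)*(N+u)\<^sup>2 / sqrt (2*y+al\<^sup>2)" using pp by (simp add: pos_le_divide_eq)
  thus ?case using t1 unfolding R_def by simp
qed

lemma intK:
  assumes y: "y \<ge> 0" and u: "0 \<le> u" "u \<le> y"
  shows "integrable mu (\<lambda>a. Kstar al (y-u+a))"
proof -
  define R where "R a = Kstar al (y-u+a) - Kstar al y - Kd al y * (a - u)" for a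
  have mR: "R \<in> borel_measurable mu" unfolding R_def
    using meas_K[of "y-u"] by (simp add: measurable_cong_sets[OF sets_mu refl])
  have pp: "sqrt (2*y+al\<^sup>2) > 0" using mean_pos y by (simp add: add_nonneg_pos)
  have "AE a in mu. norm (R a) \<le> (4/3)*(N+u)\<^sup>2 / sqrt (2*y+al\<^sup>2)"
    using Rbound[OF y u] unfolding R_def by eventually_elim auto
  hence iR: "integrable mu R" using mR by (intro integrable_const_bound) 
  have "integrable mu (\<lambda>a. R a + Kstar al y + Kd al y * (a - u))"
    using iR integ by (intro Bochner_Integration.integrable_add integrable_mult_right
        Bochner_Integration.integrable_diff) auto
  thus ?thesis unfolding R_def by simp
qed

lemma obj_bounds:
  assumes y: "y \<ge> 0" and u: "0 \<le> u" "u \<le> y"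
  shows "(1/2)*(u - Kd al y)\<^sup>2 \<le> bellman_obj mu y u"
    and "bellman_obj mu y u \<le> (1/2)*(u - Kd al y)\<^sup>2 + (4/3)*(N+u)\<^sup>2 / sqrt (2*y+al\<^sup>2)"
proof -
  define R where "R a = Kstar al (y-u+a) - Kstar al y - Kd al y * (a - u)" for a
  define p where "p = sqrt (2*y+al\<^sup>2)"
  have p2: "p\<^sup>2 = 2*y+al\<^sup>2" unfolding p_def using y by (simp add: add_nonneg_nonneg)
  have iK: "integrable mu (\<lambda>a. Kstar al (y-u+a))" by (rule intK[OF y u])
  have iL: "integrable mu (\<lambda>a. Kd al y * (a - u))"
    using integ by (intro integrable_mult_right Bochner_Integration.integrable_diff) auto
  have IR: "(\<integral>a. R a \<partial>mu) = (\<integral>a. Kstar al (y-u+a) \<partial>mu) - Kstar al y - Kd al y * (al - u)"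
  proof -
    have "(\<integral>a. R a \<partial>mu) = (\<integral>a. Kstar al (y-u+a) - Kstar al y \<partial>mu) - (\<integral>a. Kd al y * (a - u) \<partial>mu)"
      unfolding R_def using iK iL by (intro Bochner_Integration.integral_diff) auto
    also have "(\<integral>a. Kstar al (y-u+a) - Kstar al y \<partial>mu) = (\<integral>a. Kstar al (y-u+a) \<partial>mu) - Kstar al y"
      using iK by (subst Bochner_Integration.integral_diff) (auto simp: prob_space)
    also have "(\<integral>a. Kd al y * (a - u) \<partial>mu) = Kd al y * (al - u)"
      using integ by (simp add: Bochner_Integration.integral_diff arr_mean_def prob_space)
    finally show ?thesis by simp
  qed
  have B: "AE a in mu. 0 \<le> R a \<and> R a \<le> (4/3)*(N+u)\<^sup>2 / p"
    using Rbound[OF y u] unfolding R_def p_def by simp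
  have I0: "0 \<le> (\<integral>a. R a \<partial>mu)"
    using B by (intro integral_nonneg_AE) auto
  have iR: "integrable mu R"
    unfolding R_def using iK iL by (intro Bochner_Integration.integrable_diff) auto
  have I1: "(\<integral>a. R a \<partial>mu) \<le> (4/3)*(N+u)\<^sup>2 / p"
  proof -
    have "(\<integral>a. R a \<partial>mu) \<le> (\<integral>a. (4/3)*(N+u)\<^sup>2 / p \<partial>mu)"
      using B iR by (intro integral_mono_AE) auto
    thus ?thesis by (simp add: prob_space)
  qed
  have Kd: "Kd al y = al + p" unfolding Kd_def p_def ..
  have hjb: "y + (1/2)*u\<^sup>2 + Kd al y * (al - u) = (1/2)*(u - Kd al y)\<^sup>2"
    unfolding Kd using p2 by (simp add: power2_eq_square algebra_simps)
  have obj: "bellman_obj mu y u = (1/2)*(u - Kd al y)\<^sup>2 + (\<integral>a. R a \<partial>mu)"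
    unfolding bellman_obj_def cost_def IR using hjb by simp
  show "(1/2)*(u - Kd al y)\<^sup>2 \<le> bellman_obj mu y u" using obj I0 by simp
  show "bellman_obj mu y u \<le> (1/2)*(u - Kd al y)\<^sup>2 + (4/3)*(N+u)\<^sup>2 / sqrt (2*y+al\<^sup>2)"
    using obj I1 unfolding p_def by simp
qed

end





context SS begin

lemma Kd_ge: "y \<ge> 0 \<Longrightarrow> Kd al y \<ge> 2*al"
proof -
  assume y: "y \<ge> 0"
  have "sqrt (al\<^sup>2) \<le> sqrt (2*y+al\<^sup>2)" using y by (intro real_sqrt_le_mono) simp
  thus ?thesis using mean_pos unfolding Kd_def by simp
qed

lemma Kd_mono: "0 \<le> s \<Longrightarrow> s \<le> t \<Longrightarrow> Kd al s \<le> Kd al t"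
  unfolding Kd_def by simp

lemma K_inc_aux:
  assumes q: "0 \<le> q" and d: "0 \<le> d" and qd: "q + d \<le> p"
  shows "Kstar al (q+d) - Kstar al q \<le> Kstar al (p+d) - Kstar al p"
proof -
  have p: "p \<ge> 0" using q d qd by simp
  have 1: "0 \<le> Kstar al q - Kstar al (q+d) - Kd al (q+d) * (q - (q+d))"
    using tangent(1)[OF mean_pos, of "q+d" q] q d by simp
  have 2: "0 \<le> Kstar al (p+d) - Kstar al p - Kd al p * ((p+d) - p)"
    using tangent(1)[OF mean_pos p, of "p+d"] p d by simp
  have 3: "Kd al (q+d) * d \<le> Kd al p * d"
    using Kd_mono[of "q+d" p] q d qd by (intro mult_right_mono) auto
  show ?thesis using 1 2 3 by (simp add: algebra_simps)
qed

lemma K_inc: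
  assumes q: "0 \<le> q" and d: "0 \<le> d" and qp: "q \<le> p"
  shows "Kstar al (q+d) - Kstar al q \<le> Kstar al (p+d) - Kstar al p"
proof (cases "q + d \<le> p")
  case True thus ?thesis using K_inc_aux q d by blast
next
  case False
  have "Kstar al (q+(p-q)) - Kstar al q \<le> Kstar al ((q+d)+(p-q)) - Kstar al (q+d)"
    using K_inc_aux[of q "p-q" "q+d"] q qp False by simp
  thus ?thesis by (simp add: algebra_simps)
qed

lemma K_mid:
  assumes "0 \<le> s" "0 \<le> t"
  shows "2 * Kstar al ((s+t)/2) \<le> Kstar al s + Kstar al t"
proof -
  have m: "(s+t)/2 \<ge> 0" using assms by simp
  have 1: "0 \<le> Kstar al s - Kstar al ((s+t)/2) - Kd al ((s+t)/2) * (s - (s+t)/2)"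
    using tangent(1)[OF mean_pos m, of s] assms by simp
  have 2: "0 \<le> Kstar al t - Kstar al ((s+t)/2) - Kd al ((s+t)/2) * (t - (s+t)/2)"
    using tangent(1)[OF mean_pos m, of t] assms by simp
  have e: "Kd al ((s+t)/2) * (s - (s+t)/2) + Kd al ((s+t)/2) * (t - (s+t)/2) = 0"
    by (simp add: algebra_simps)
  show ?thesis using 1 2 e by linarith
qed

lemma obj_diff:
  assumes y: "y \<ge> 0" and u: "0 \<le> u" "u \<le> y" and v: "0 \<le> v" "v \<le> y"
  shows "bellman_obj mu y u - bellman_obj mu y v =
     (u\<^sup>2 - v\<^sup>2)/2 + (\<integral>a. Kstar al (y-u+a) - Kstar al (y-v+a) \<partial>mu)"
  unfolding bellman_obj_def cost_def
  using intK[OF y u] intK[OF y v] by (simp add: Bochner_Integration.integral_diff field_simps)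

lemma int_diff_int:
  assumes y: "y \<ge> 0" and u: "0 \<le> u" "u \<le> y" and v: "0 \<le> v" "v \<le> y"
  shows "integrable mu (\<lambda>a. Kstar al (y-u+a) - Kstar al (y-v+a))"
  using intK[OF y u] intK[OF y v] by (rule Bochner_Integration.integrable_diff)

end

locale SP = SS +
  fixes phi :: "real \<Rightarrow> real"
  assumes myopic: "\<And>x. x \<ge> 0 \<Longrightarrow>
        0 \<le> phi x \<and> phi x \<le> x \<and> bellman_obj mu x (phi x) = bellman_err mu x"
begin

lemma err_le:
  assumes y: "y \<ge> 0" and u: "0 \<le> u" "u \<le> y"
  shows "bellman_err mu y \<le> bellman_obj mu y u"
  unfolding bellman_err_def
proof (rule cInf_lower)
  show "bellman_obj mu y u \<in> bellman_obj mu y ` {0..y}" using u by auto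
  show "bdd_below (bellman_obj mu y ` {0..y})"
  proof (rule bdd_belowI2)
    fix w assume "w \<in> {0..y}"
    hence "(1/2)*(w - Kd al y)\<^sup>2 \<le> bellman_obj mu y w" using obj_bounds(1)[OF y] by auto
    moreover have "0 \<le> (1/2)*(w - Kd al y)\<^sup>2" by simp
    ultimately show "0 \<le> bellman_obj mu y w" by linarith
  qed
qed

lemma phi0: "y \<ge> 0 \<Longrightarrow> 0 \<le> phi y" and phi1: "y \<ge> 0 \<Longrightarrow> phi y \<le> y"
  and err_eq: "y \<ge> 0 \<Longrightarrow> bellman_err mu y = bellman_obj mu y (phi y)"
  using myopic by auto

lemma err_nonneg: "y \<ge> 0 \<Longrightarrow> 0 \<le> bellman_err mu y"
proof -
  assume y: "y \<ge> 0"
  have "(1/2)*(phi y - Kd al y)\<^sup>2 \<le> bellman_obj mu y (phi y)"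
    using obj_bounds(1)[of y "phi y"] phi0 phi1 y by auto
  moreover have "0 \<le> (1/2)*(phi y - Kd al y)\<^sup>2" by simp
  ultimately show ?thesis using err_eq[OF y] by linarith
qed

lemma phi_min: assumes y: "y \<ge> 0" shows "phi y \<ge> min y (2*al)"
proof (rule ccontr)
  define v where "v = min y (2*al)"
  define u where "u = phi y"
  assume "\<not> phi y \<ge> min y (2*al)"
  hence uv: "u < v" unfolding u_def v_def by (auto simp: not_le)
  have u0: "0 \<le> u" "u \<le> y" using phi0 phi1 y unfolding u_def by auto
  have v0: "0 \<le> v" "v \<le> y" using y mean_pos unfolding v_def by auto
  have "(\<integral>a. 2*al*(v-u) \<partial>mu) \<le> (\<integral>a. Kstar al (y-u+a) - Kstar al (y-v+a) \<partial>mu)"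
  proof (rule integral_mono_AE)
    show "integrable mu (\<lambda>a. 2*al*(v-u))" by simp
    show "integrable mu (\<lambda>a. Kstar al (y-u+a) - Kstar al (y-v+a))"
      by (rule int_diff_int[OF y u0 v0])
    show "AE a in mu. 2*al*(v-u) \<le> Kstar al (y-u+a) - Kstar al (y-v+a)"
      using nonneg
    proof eventually_elim
      case (elim a)
      have s: "y - v + a \<ge> 0" using elim v0 by simp
      have t: "y - u + a \<ge> 0" using elim u0 by simp
      have 1: "0 \<le> Kstar al (y-u+a) - Kstar al (y-v+a) - Kd al (y-v+a) * ((y-u+a) - (y-v+a))"
        by (rule tangent(1)[OF mean_pos s t])
      have 2: "2*al*(v-u) \<le> Kd al (y-v+a) * (v-u)"
        using Kd_ge[OF s] uv by (intro mult_right_mono) auto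
      show ?case using 1 2 by (simp add: algebra_simps)
    qed
  qed
  hence I: "2*al*(v-u) \<le> (\<integral>a. Kstar al (y-u+a) - Kstar al (y-v+a) \<partial>mu)"
    by (simp add: prob_space)
  have D: "bellman_obj mu y u - bellman_obj mu y v = (u\<^sup>2 - v\<^sup>2)/2 + (\<integral>a. Kstar al (y-u+a) - Kstar al (y-v+a) \<partial>mu)"
    by (rule obj_diff[OF y u0 v0])
  have "v \<le> 2*al" unfolding v_def by simp
  hence "0 < (v-u)*(2*al - (u+v)/2)" using uv u0 by (intro mult_pos_pos) auto
  moreover have "(v-u)*(2*al - (u+v)/2) = (u\<^sup>2-v\<^sup>2)/2 + 2*al*(v-u)"
    by (simp add: power2_eq_square field_simps)
  moreover have "(u\<^sup>2-v\<^sup>2)/2 + 2*al*(v-u) \<le> bellman_obj mu y u - bellman_obj mu y v"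
    unfolding D using I by (rule add_left_mono)
  ultimately have "bellman_obj mu y u - bellman_obj mu y v > 0" by linarith
  moreover have "bellman_obj mu y u \<le> bellman_obj mu y v"
    using err_le[OF y v0] err_eq[OF y] unfolding u_def by simp
  ultimately show False by simp
qed

end





context SP begin

lemma phi_mono:
  assumes y: "0 \<le> y" and yz: "y \<le> z"
  shows "phi y \<le> phi z"
proof (rule ccontr)
  assume "\<not> phi y \<le> phi z"
  define u where "u = phi z"
  define v where "v = phi y"
  have uv: "u < v" using \<open>\<not> phi y \<le> phi z\<close> unfolding u_def v_def by simp
  have z: "0 \<le> z" using y yz by simp
  have v0: "0 \<le> v" "v \<le> y" using phi0 phi1 y unfolding v_def by auto
  have u0: "0 \<le> u" "u \<le> z" using phi0 phi1 z unfolding u_def by auto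
  have uy: "0 \<le> u" "u \<le> y" using u0 uv v0 by auto
  have vz: "0 \<le> v" "v \<le> z" using v0 yz by auto
  have e1: "bellman_obj mu y v \<le> bellman_obj mu y u"
    using err_le[OF y uy] err_eq[OF y] unfolding v_def by simp
  have e2: "bellman_obj mu z u \<le> bellman_obj mu z v"
    using err_le[OF z vz] err_eq[OF z] unfolding u_def by simp
  have Dz: "bellman_obj mu z v - bellman_obj mu z u =
     (v\<^sup>2 - u\<^sup>2)/2 + (\<integral>a. Kstar al (z-v+a) - Kstar al (z-u+a) \<partial>mu)"
    by (rule obj_diff[OF z vz u0])
  have Dy: "bellman_obj mu y v - bellman_obj mu y u =
     (v\<^sup>2 - u\<^sup>2)/2 + (\<integral>a. Kstar al (y-v+a) - Kstar al (y-u+a) \<partial>mu)"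
    by (rule obj_diff[OF y v0 uy])
  have I: "(\<integral>a. Kstar al (z-v+a) - Kstar al (z-u+a) \<partial>mu) \<le> (\<integral>a. Kstar al (y-v+a) - Kstar al (y-u+a) \<partial>mu)"
  proof (rule integral_mono_AE)
    show "integrable mu (\<lambda>a. Kstar al (z-v+a) - Kstar al (z-u+a))" by (rule int_diff_int[OF z vz u0])
    show "integrable mu (\<lambda>a. Kstar al (y-v+a) - Kstar al (y-u+a))" by (rule int_diff_int[OF y v0 uy])
    show "AE a in mu. Kstar al (z-v+a) - Kstar al (z-u+a) \<le> Kstar al (y-v+a) - Kstar al (y-u+a)"
      using nonneg
    proof eventually_elim
      case (elim a)
      have "Kstar al ((y-v+a)+(v-u)) - Kstar al (y-v+a) \<le> Kstar al ((z-v+a)+(v-u)) - Kstar al (z-v+a)"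
        using elim v0 uv yz by (intro K_inc) auto
      thus ?case by (simp add: algebra_simps)
    qed
  qed
  have eq: "bellman_obj mu z u = bellman_obj mu z v" using Dz Dy I e1 e2 by linarith
  define m where "m = (u+v)/2"
  have m0: "0 \<le> m" "m \<le> z" using u0 vz unfolding m_def by auto
  have Dm1: "bellman_obj mu z m - bellman_obj mu z u =
     (m\<^sup>2 - u\<^sup>2)/2 + (\<integral>a. Kstar al (z-m+a) - Kstar al (z-u+a) \<partial>mu)"
    by (rule obj_diff[OF z m0 u0])
  have Dm2: "bellman_obj mu z m - bellman_obj mu z v =
     (m\<^sup>2 - v\<^sup>2)/2 + (\<integral>a. Kstar al (z-m+a) - Kstar al (z-v+a) \<partial>mu)"
    by (rule obj_diff[OF z m0 vz])
  have iA: "integrable mu (\<lambda>a. Kstar al (z-m+a) - Kstar al (z-u+a))" by (rule int_diff_int[OF z m0 u0])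
  have iB: "integrable mu (\<lambda>a. Kstar al (z-m+a) - Kstar al (z-v+a))" by (rule int_diff_int[OF z m0 vz])
  have S: "(\<integral>a. Kstar al (z-m+a) - Kstar al (z-u+a) \<partial>mu) + (\<integral>a. Kstar al (z-m+a) - Kstar al (z-v+a) \<partial>mu)
      = (\<integral>a. (Kstar al (z-m+a) - Kstar al (z-u+a)) + (Kstar al (z-m+a) - Kstar al (z-v+a)) \<partial>mu)"
    by (rule Bochner_Integration.integral_add[OF iA iB, symmetric])
  have S0: "(\<integral>a. (Kstar al (z-m+a) - Kstar al (z-u+a)) + (Kstar al (z-m+a) - Kstar al (z-v+a)) \<partial>mu) \<le> 0"
  proof -
   have "(\<integral>a. (Kstar al (z-m+a) - Kstar al (z-u+a)) + (Kstar al (z-m+a) - Kstar al (z-v+a)) \<partial>mu) \<le> (\<integral>a. 0 \<partial>mu)"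
   proof (rule integral_mono_AE)
    show "integrable mu (\<lambda>a. (Kstar al (z-m+a) - Kstar al (z-u+a)) + (Kstar al (z-m+a) - Kstar al (z-v+a)))"
      by (rule Bochner_Integration.integrable_add[OF iA iB])
    show "integrable mu (\<lambda>a. 0::real)" by simp
    show "AE a in mu. (Kstar al (z-m+a) - Kstar al (z-u+a)) + (Kstar al (z-m+a) - Kstar al (z-v+a)) \<le> 0"
      using nonneg
    proof eventually_elim
      case (elim a)
      have mid: "2 * Kstar al (((z-u+a)+(z-v+a))/2) \<le> Kstar al (z-u+a) + Kstar al (z-v+a)"
        using elim u0 vz by (intro K_mid) auto
      have eqm: "((z-u+a)+(z-v+a))/2 = z-m+a" unfolding m_def by (simp add: field_simps)
      from mid have "2 * Kstar al (z-m+a) \<le> Kstar al (z-u+a) + Kstar al (z-v+a)" unfolding eqm .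
      thus ?case by linarith
    qed
   qed
   thus ?thesis by simp
  qed
  have Q: "(m\<^sup>2 - u\<^sup>2)/2 + (m\<^sup>2 - v\<^sup>2)/2 = -((u-v)\<^sup>2/4)"
    unfolding m_def by (simp add: power2_eq_square field_simps)
  have "(u-v)\<^sup>2 > 0" using uv by simp
  hence "bellman_obj mu z m < bellman_obj mu z u"
    using Dm1 Dm2 S S0 Q eq by linarith
  moreover have "bellman_obj mu z u \<le> bellman_obj mu z m"
    using err_le[OF z m0] err_eq[OF z] unfolding u_def by simp
  ultimately show False by simp
qed

end





context SP begin

definition "C0 = (4/3)*((N+al)\<^sup>2/al + 2*(N+al)) + (1/2)*(2*al+2)\<^sup>2 + (4/3)*(N+2*al+2)\<^sup>2/al"

lemma C0_nonneg: "0 \<le> C0"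
  unfolding C0_def using mean_pos Npos by simp

lemma sqrt_facts:
  assumes y: "y \<ge> 0"
  shows "(sqrt (2*y+al\<^sup>2))\<^sup>2 = 2*y+al\<^sup>2" "al \<le> sqrt (2*y+al\<^sup>2)" "0 < sqrt (2*y+al\<^sup>2)"
proof -
  show "(sqrt (2*y+al\<^sup>2))\<^sup>2 = 2*y+al\<^sup>2" using y by (simp add: add_nonneg_nonneg)
  have "sqrt (al\<^sup>2) \<le> sqrt (2*y+al\<^sup>2)" using y by (intro real_sqrt_le_mono) simp
  thus "al \<le> sqrt (2*y+al\<^sup>2)" using mean_pos by simp
  thus "0 < sqrt (2*y+al\<^sup>2)" using mean_pos by linarith
qed

lemma f_upper:
  assumes y: "y \<ge> 0"
  shows "bellman_err mu y \<le> C0 + (4/3)* sqrt (2*y+al\<^sup>2)"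
proof -
  define p where "p = sqrt (2*y+al\<^sup>2)"
  note pf = sqrt_facts[OF y, folded p_def]
  have Kd: "Kd al y = al + p" unfolding Kd_def p_def ..
  have al: "al > 0" by (rule mean_pos)
  have t1: "0 \<le> (1/2)*(2*al+2)\<^sup>2" "0 \<le> (4/3)*(N+2*al+2)\<^sup>2/al"
    "0 \<le> (4/3)*((N+al)\<^sup>2/al + 2*(N+al))" using al Npos by auto
  show ?thesis
  proof (cases "Kd al y \<le> y")
    case True
    define u where "u = Kd al y"
    have u0: "0 \<le> u" "u \<le> y" using True Kd pf al unfolding u_def by auto
    have "bellman_err mu y \<le> (1/2)*(u - Kd al y)\<^sup>2 + (4/3)*(N+u)\<^sup>2 / p"
      using err_le[OF y u0] obj_bounds(2)[OF y u0] unfolding p_def by linarith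
    also have "\<dots> = (4/3)*((N+al)\<^sup>2/p + 2*(N+al) + p)"
      unfolding u_def Kd using pf by (simp add: power2_eq_square field_simps)
    also have "\<dots> \<le> (4/3)*((N+al)\<^sup>2/al + 2*(N+al) + p)"
    proof -
      have "(N+al)\<^sup>2/p \<le> (N+al)\<^sup>2/al" using pf al by (intro divide_left_mono) auto
      thus ?thesis by simp
    qed
    also have "\<dots> \<le> C0 + (4/3)*p" unfolding C0_def using t1 by (simp add: algebra_simps)
    finally show ?thesis unfolding p_def .
  next
    case False
    have u0: "0 \<le> y" "y \<le> y" using y by auto
    have yl: "y < al + p" using False Kd by simp
    have "p\<^sup>2 < 2*al + 2*p + al\<^sup>2" using pf(1) yl by linarith
    hence "(p - 1)\<^sup>2 < (al + 1)\<^sup>2" by (simp add: power2_eq_square algebra_simps)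
    hence "p - 1 < al + 1" using al by (smt (verit) power_mono)
    hence pb: "p < al + 2" by simp
    have b1: "(y - Kd al y)\<^sup>2 \<le> (2*al+2)\<^sup>2"
    proof -
      have "\<bar>y - Kd al y\<bar> \<le> \<bar>2*al+2\<bar>" using yl Kd y pb al by auto
      thus ?thesis by (simp add: abs_le_square_iff)
    qed
    have b2: "(N+y)\<^sup>2/p \<le> (N+2*al+2)\<^sup>2/al"
    proof (rule frac_le)
      show "(N+y)\<^sup>2 \<le> (N+2*al+2)\<^sup>2" using yl pb y Npos by (intro power_mono) auto
    qed (use pf al in auto)
    have "bellman_err mu y \<le> (1/2)*(y - Kd al y)\<^sup>2 + (4/3)*(N+y)\<^sup>2 / p"
      using err_le[OF y u0] obj_bounds(2)[OF y u0] unfolding p_def by linarith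
    also have "\<dots> \<le> (1/2)*(2*al+2)\<^sup>2 + (4/3)*((N+2*al+2)\<^sup>2/al)"
      using b1 b2 by simp
    also have "\<dots> \<le> C0 + (4/3)*p" unfolding C0_def using t1 pf by simp
    finally show ?thesis unfolding p_def .
  qed
qed

lemma phi_fluid:
  assumes y: "y \<ge> 0"
  shows "(phi y - al - sqrt (2*y+al\<^sup>2))\<^sup>2 \<le> 2*C0 + (8/3)* sqrt (2*y+al\<^sup>2)"
proof -
  have "(1/2)*(phi y - Kd al y)\<^sup>2 \<le> bellman_obj mu y (phi y)"
    using obj_bounds(1)[OF y] phi0[OF y] phi1[OF y] by auto
  hence "(1/2)*(phi y - Kd al y)\<^sup>2 \<le> C0 + (4/3)* sqrt (2*y+al\<^sup>2)"
    using f_upper[OF y] err_eq[OF y] by linarith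
  thus ?thesis unfolding Kd_def by (simp add: algebra_simps)
qed

definition "P1 = 32/3 + 8*C0/al"
definition "AA = C0/al + 8/3 + (C0 + (4/3)*P1)/al"

lemma drift_big:
  assumes y: "y > 2*al"
  shows "C0 + (4/3)* sqrt (2*y+al\<^sup>2) \<le> AA * (phi y - al)"
proof -
  have y0: "y \<ge> 0" using y mean_pos by simp
  define p where "p = sqrt (2*y+al\<^sup>2)"
  define d where "d = phi y - al"
  note pf = sqrt_facts[OF y0, folded p_def]
  have al: "al > 0" by (rule mean_pos)
  have "phi y \<ge> 2*al" using phi_min[OF y0] y by simp
  hence dal: "d \<ge> al" unfolding d_def by simp
  have fl: "(d - p)\<^sup>2 \<le> 2*C0 + (8/3)*p" using phi_fluid[OF y0] unfolding d_def p_def by simp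
  have c0: "0 \<le> C0" by (rule C0_nonneg)
  have P1p: "0 \<le> P1" unfolding P1_def using c0 al by simp
  have g1: "0 \<le> C0/al" "0 \<le> (C0 + (4/3)*P1)/al" using c0 al P1p by auto
  show ?thesis
  proof (cases "d \<ge> p/2")
    case True
    have "C0 = (C0/al)*al" using al by simp
    also have "\<dots> \<le> (C0/al)*d" using g1 dal by (intro mult_left_mono) auto
    finally have "C0 \<le> (C0/al)*d" .
    moreover have "(4/3)*p \<le> (8/3)*d" using True by simp
    moreover have "0 \<le> ((C0 + (4/3)*P1)/al)*d" using g1 dal al by (intro mult_nonneg_nonneg) auto
    ultimately have "C0 + (4/3)*p \<le> AA*d" unfolding AA_def by (simp add: algebra_simps)
    thus ?thesis unfolding p_def d_def .
  next
    case False
    hence "p/2 < p - d" by simp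
    hence "(p/2)\<^sup>2 < (p - d)\<^sup>2" using pf by (intro power_strict_mono) auto
    hence "p\<^sup>2/4 < 2*C0 + (8/3)*p" using fl by (simp add: power2_eq_square algebra_simps)
    hence "p * p < 8*C0 + (32/3)*p" by (simp add: power2_eq_square)
    hence "p < 8*C0/p + 32/3" using pf by (simp add: field_simps)
    moreover have "8*C0/p \<le> 8*C0/al" using pf al c0 by (intro divide_left_mono) auto
    ultimately have "p \<le> P1" unfolding P1_def by simp
    hence "C0 + (4/3)*p \<le> C0 + (4/3)*P1" by simp
    also have "\<dots> = ((C0 + (4/3)*P1)/al)*al" using al by simp
    also have "\<dots> \<le> ((C0 + (4/3)*P1)/al)*d" using g1 dal by (intro mult_left_mono) auto
    also have "\<dots> \<le> AA*d"
    proof -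
      have "0 \<le> C0/al*d" using g1 dal al by (intro mult_nonneg_nonneg) auto
      moreover have "0 \<le> 8/3*d" using dal al by simp
      ultimately show ?thesis unfolding AA_def distrib_right by linarith
    qed
    finally show ?thesis unfolding p_def d_def .
  qed
qed

end





locale SQ = SP +
  assumes atom0: "measure mu {0} > 0"
begin

definition "F1 = C0 + (4/3) * sqrt (4*al + al\<^sup>2)"
definition "BB = (F1 + AA*al) / measure mu {0}"
definition "ft y = C0 + (4/3) * sqrt (2*y + al\<^sup>2)"
definition "psi y = phi (max y 0)"

lemma AA_nonneg: "0 \<le> AA"
  unfolding AA_def P1_def using C0_nonneg mean_pos by simp

lemma F1_nonneg: "0 \<le> F1"
  unfolding F1_def using C0_nonneg mean_pos by (simp add: add_nonneg_nonneg)

lemma BB_nonneg: "0 \<le> BB"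
  unfolding BB_def using F1_nonneg AA_nonneg mean_pos atom0 by simp

lemma ev0: "{0::real} \<in> sets mu" "UNIV - {0::real} \<in> sets mu"
  using sets_mu by auto

lemma drift:
  assumes y: "y \<ge> 0"
  shows "ennreal (ft y) + (\<integral>\<^sup>+a. (if y - psi y + a = 0 then 0 else ennreal (AA*(y - psi y + a) + BB)) \<partial>mu)
     \<le> ennreal (AA*y + BB)"
proof -
  have psi: "psi y = phi y" unfolding psi_def using y by simp
  have al: "al > 0" by (rule mean_pos)
  have ft0: "0 \<le> ft y" unfolding ft_def using C0_nonneg mean_pos y by (simp add: add_nonneg_nonneg)
  show ?thesis
  proof (cases "y \<le> 2*al")
    case True
    have py: "psi y = y" using phi_min[OF y] phi1[OF y] True psi by simp
    have iI: "integrable mu (indicator (UNIV - {0}) :: real \<Rightarrow> real)"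
      using ev0 by (intro integrable_real_indicator) (auto simp: less_top[symmetric])
    have ig: "integrable mu (\<lambda>a. AA*a + BB * indicator (UNIV - {0}) a)"
      using integ iI by (intro Bochner_Integration.integrable_add integrable_mult_right) auto
    have "(\<integral>\<^sup>+a. (if y - psi y + a = 0 then 0 else ennreal (AA*(y - psi y + a) + BB)) \<partial>mu)
        = (\<integral>\<^sup>+a. ennreal (AA*a + BB * indicator (UNIV - {0}) a) \<partial>mu)"
      unfolding py by (intro nn_integral_cong) (auto split: split_indicator)
    also have "\<dots> = ennreal (\<integral>a. AA*a + BB * indicator (UNIV - {0}) a \<partial>mu)"
    proof (rule nn_integral_eq_integral[OF ig])
      show "AE a in mu. 0 \<le> AA*a + BB * indicator (UNIV - {0}) a"
        using nonneg by eventually_elim (use AA_nonneg BB_nonneg in \<open>auto split: split_indicator\<close>)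
    qed
    also have "(\<integral>a. AA*a + BB * indicator (UNIV - {0}) a \<partial>mu) = AA*al + BB*(1 - measure mu {0})"
    proof -
      have "(\<integral>a. AA*a + BB * indicator (UNIV - {0}) a \<partial>mu) = AA*al + BB * measure mu (UNIV - {0})"
        using integ iI ev0 by (simp add: Bochner_Integration.integral_add arr_mean_def)
      moreover have "measure mu (UNIV - {0}) = 1 - measure mu {0}"
        using prob_compl[OF ev0(1)] space_mu by simp
      ultimately show ?thesis by simp
    qed
    finally have E: "(\<integral>\<^sup>+a. (if y - psi y + a = 0 then 0 else ennreal (AA*(y - psi y + a) + BB)) \<partial>mu)
        = ennreal (AA*al + BB*(1 - measure mu {0}))" .
    have p0: "measure mu {0} \<le> 1" by (rule prob_le_1)
    have nn: "0 \<le> AA*al + BB*(1 - measure mu {0})" using AA_nonneg BB_nonneg al p0 by simp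
    have "ft y \<le> F1" unfolding ft_def F1_def using True by simp
    moreover have "BB * measure mu {0} = F1 + AA*al" unfolding BB_def using atom0 by simp
    ultimately have "ft y + (AA*al + BB*(1 - measure mu {0})) \<le> AA*y + BB"
      using AA_nonneg y by (simp add: algebra_simps) (smt (verit) mult_nonneg_nonneg)
    thus ?thesis unfolding E using ft0 nn by (simp add: ennreal_plus[symmetric] del: ennreal_plus)
  next
    case False
    hence y2: "y > 2*al" by simp
    define c where "c = y - phi y"
    have c0: "0 \<le> c" unfolding c_def using phi1[OF y] by simp
    have ig: "integrable mu (\<lambda>a. AA*(c + a) + BB)"
      using integ by (intro Bochner_Integration.integrable_add integrable_mult_right) auto
    have "(\<integral>\<^sup>+a. (if y - psi y + a = 0 then 0 else ennreal (AA*(y - psi y + a) + BB)) \<partial>mu)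
        \<le> (\<integral>\<^sup>+a. ennreal (AA*(c + a) + BB) \<partial>mu)"
      unfolding psi c_def[symmetric] by (intro nn_integral_mono) auto
    also have "\<dots> = ennreal (\<integral>a. AA*(c + a) + BB \<partial>mu)"
    proof (rule nn_integral_eq_integral[OF ig])
      show "AE a in mu. 0 \<le> AA*(c + a) + BB"
        using nonneg by eventually_elim (use AA_nonneg BB_nonneg c0 in auto)
    qed
    also have "(\<integral>a. AA*(c + a) + BB \<partial>mu) = AA*(c + al) + BB"
      using integ by (simp add: Bochner_Integration.integral_add arr_mean_def prob_space algebra_simps)
    finally have E: "(\<integral>\<^sup>+a. (if y - psi y + a = 0 then 0 else ennreal (AA*(y - psi y + a) + BB)) \<partial>mu)
        \<le> ennreal (AA*(c + al) + BB)" .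
    have nn: "0 \<le> AA*(c + al) + BB" using AA_nonneg BB_nonneg c0 al by simp
    have "ft y \<le> AA * (phi y - al)" using drift_big[OF y2] unfolding ft_def .
    hence "ft y + (AA*(c + al) + BB) \<le> AA*y + BB" unfolding c_def by (simp add: algebra_simps)
    hence "ennreal (ft y) + ennreal (AA*(c + al) + BB) \<le> ennreal (AA*y + BB)"
      using ft0 nn by (simp add: ennreal_plus[symmetric] del: ennreal_plus)
    thus ?thesis using E by (meson add_left_mono order_trans)
  qed
qed

end





lemma Xshift: "Xpath f x (a ## w) (Suc t) = Xpath f (x - f x + a) w t"
  by (induction t) auto

definition alive :: "(real \<Rightarrow> real) \<Rightarrow> real \<Rightarrow> real stream \<Rightarrow> nat \<Rightarrow> bool" where
  "alive f x w t = (\<forall>s. 1 \<le> s \<and> s \<le> t \<longrightarrow> Xpath f x w s \<noteq> 0)"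

lemma alive0: "alive f x w 0"
  unfolding alive_def by auto

lemma tau_alive: "(enat t < tau0 f x w) = alive f x w t"
proof (cases "\<exists>t\<ge>1. Xpath f x w t = 0")
  case True
  define L where "L = (LEAST t. t \<ge> 1 \<and> Xpath f x w t = 0)"
  have L: "L \<ge> 1" "Xpath f x w L = 0" using LeastI_ex[OF True] unfolding L_def by auto
  have tau: "tau0 f x w = enat L" unfolding tau0_def L_def using True by simp
  show ?thesis unfolding tau alive_def
  proof
    assume "enat t < enat L"
    hence tL: "t < L" by simp
    show "\<forall>s. 1 \<le> s \<and> s \<le> t \<longrightarrow> Xpath f x w s \<noteq> 0"
    proof (intro allI impI)
      fix s assume s: "1 \<le> s \<and> s \<le> t"
      hence "s < L" using tL by simp
      hence "\<not> (s \<ge> 1 \<and> Xpath f x w s = 0)" unfolding L_def by (rule not_less_Least)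
      thus "Xpath f x w s \<noteq> 0" using s by simp
    qed
  next
    assume H: "\<forall>s. 1 \<le> s \<and> s \<le> t \<longrightarrow> Xpath f x w s \<noteq> 0"
    show "enat t < enat L"
    proof (rule ccontr)
      assume "\<not> enat t < enat L"
      hence "L \<le> t" by simp
      thus False using H L by auto
    qed
  qed
next
  case False
  thus ?thesis unfolding tau0_def alive_def by auto
qed

lemma alive_Suc:
  "alive f x (a ## w) (Suc t) = (x - f x + a \<noteq> 0 \<and> alive f (x - f x + a) w t)"
proof
  assume H: "alive f x (a ## w) (Suc t)"
  have "Xpath f x (a ## w) (Suc 0) \<noteq> 0" using H unfolding alive_def by auto
  hence 1: "x - f x + a \<noteq> 0" unfolding Xshift by simp
  have "alive f (x - f x + a) w t"
    unfolding alive_def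
  proof (intro allI impI)
    fix s assume s: "1 \<le> s \<and> s \<le> t"
    hence "Xpath f x (a ## w) (Suc s) \<noteq> 0" using H unfolding alive_def by auto
    thus "Xpath f (x - f x + a) w s \<noteq> 0" unfolding Xshift .
  qed
  thus "x - f x + a \<noteq> 0 \<and> alive f (x - f x + a) w t" using 1 by simp
next
  assume H: "x - f x + a \<noteq> 0 \<and> alive f (x - f x + a) w t"
  show "alive f x (a ## w) (Suc t)"
    unfolding alive_def
  proof (intro allI impI)
    fix s assume s: "1 \<le> s \<and> s \<le> Suc t"
    then obtain s' where s': "s = Suc s'" by (cases s) auto
    show "Xpath f x (a ## w) s \<noteq> 0"
    proof (cases "s' = 0")
      case True thus ?thesis using H s' Xshift[of f x a w 0] by simp
    next
      case False thus ?thesis using H s s' Xshift[of f x a w s'] unfolding alive_def by auto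
    qed
  qed
qed

definition Tn :: "(real \<Rightarrow> real) \<Rightarrow> (real \<Rightarrow> real) \<Rightarrow> real \<Rightarrow> real stream \<Rightarrow> nat \<Rightarrow> ennreal" where
  "Tn f g x w n = (\<Sum>t<n. if alive f x w t then ennreal (g (Xpath f x w t)) else 0)"

lemma Tn_shift:
  "Tn f g x (a ## w) (Suc n) =
     ennreal (g x) + (if x - f x + a = 0 then 0 else Tn f g (x - f x + a) w n)"
  unfolding Tn_def sum.lessThan_Suc_shift alive_Suc Xshift
  by (simp add: alive0)

context SQ begin

lemma psi_mono: "mono psi"
  unfolding psi_def mono_def using phi_mono by simp

lemma psi_meas[measurable]: "psi \<in> borel_measurable borel"
  by (rule borel_measurable_mono[OF psi_mono])

lemma ft_meas[measurable]: "ft \<in> borel_measurable borel"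
  unfolding ft_def by measurable

lemma snth_meas[measurable]: "(\<lambda>w. w !! n) \<in> borel_measurable (stream_space mu)"
  using measurable_snth[of n mu] unfolding measurable_cong_sets[OF refl sets_mu] .

lemma X_meas[measurable]: "(\<lambda>w. Xpath psi x w t) \<in> borel_measurable (stream_space mu)"
proof (induction t)
  case 0 thus ?case by simp
next
  case (Suc t)
  note [measurable] = Suc
  show ?case by simp
qed

lemma alive_meas[measurable]: "Measurable.pred (stream_space mu) (\<lambda>w. alive psi x w t)"
  unfolding alive_def by measurable

lemma Tn_meas[measurable]: "(\<lambda>w. Tn psi ft x w n) \<in> borel_measurable (stream_space mu)"
  unfolding Tn_def by measurable

end





context SQ begin

lemma good_path:
  assumes x: "x \<ge> 0" and w: "\<forall>n. 0 \<le> w !! n"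
  shows "Xpath phi x w t = Xpath psi x w t \<and> 0 \<le> Xpath psi x w t"
proof (induction t)
  case 0 thus ?case using x by simp
next
  case (Suc t)
  define X where "X = Xpath psi x w t"
  have X0: "0 \<le> X" and eq: "Xpath phi x w t = X" using Suc unfolding X_def by auto
  have ps: "psi X = phi X" unfolding psi_def using X0 by simp
  have "phi X \<le> X" using phi1[OF X0] .
  moreover have "0 \<le> w !! t" using w by simp
  ultimately show ?case using eq ps unfolding X_def by simp
qed

lemma tau_eq:
  assumes x: "x \<ge> 0" and w: "\<forall>n. 0 \<le> w !! n"
  shows "tau0 phi x w = tau0 psi x w"
proof -
  have "\<And>t. Xpath phi x w t = Xpath psi x w t" using good_path[OF x w] by blast
  thus ?thesis unfolding tau0_def by simp
qed

lemma Gn: "\<forall>x\<ge>0. (\<integral>\<^sup>+w. Tn psi ft x w n \<partial>stream_space mu) \<le> ennreal (AA*x + BB)"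
proof (induction n)
  case 0
  show ?case by (simp add: Tn_def)
next
  case (Suc n)
  interpret S: prob_space "stream_space mu" by (rule prob_space_stream_space)
  show ?case
  proof (intro allI impI)
    fix x :: real assume x: "x \<ge> 0"
    define x' where "x' a = x - psi x + a" for a
    have "(\<integral>\<^sup>+w. Tn psi ft x w (Suc n) \<partial>stream_space mu)
        = (\<integral>\<^sup>+a. (\<integral>\<^sup>+w. Tn psi ft x (a ## w) (Suc n) \<partial>stream_space mu) \<partial>mu)"
      by (rule nn_integral_stream_space) measurable
    also have "\<dots> = (\<integral>\<^sup>+a. ennreal (ft x) + (if x' a = 0 then 0 else (\<integral>\<^sup>+w. Tn psi ft (x' a) w n \<partial>stream_space mu)) \<partial>mu)"
    proof (rule nn_integral_cong)
      fix a
      show "(\<integral>\<^sup>+w. Tn psi ft x (a ## w) (Suc n) \<partial>stream_space mu)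
          = ennreal (ft x) + (if x' a = 0 then 0 else (\<integral>\<^sup>+w. Tn psi ft (x' a) w n \<partial>stream_space mu))"
      proof (cases "x' a = 0")
        case True
        thus ?thesis unfolding Tn_shift x'_def[symmetric] by (simp add: S.emeasure_space_1)
      next
        case False
        have "(\<integral>\<^sup>+w. Tn psi ft x (a ## w) (Suc n) \<partial>stream_space mu)
            = (\<integral>\<^sup>+w. ennreal (ft x) + Tn psi ft (x' a) w n \<partial>stream_space mu)"
          unfolding Tn_shift x'_def[symmetric] using False by simp
        also have "\<dots> = (\<integral>\<^sup>+w. ennreal (ft x) \<partial>stream_space mu) + (\<integral>\<^sup>+w. Tn psi ft (x' a) w n \<partial>stream_space mu)"
          by (rule nn_integral_add) auto
        finally show ?thesis using False by (simp add: S.emeasure_space_1)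
      qed
    qed
    also have "\<dots> \<le> (\<integral>\<^sup>+a. ennreal (ft x) + (if x' a = 0 then 0 else ennreal (AA * x' a + BB)) \<partial>mu)"
    proof (rule nn_integral_mono_AE)
      show "AE a in mu. ennreal (ft x) + (if x' a = 0 then 0 else (\<integral>\<^sup>+w. Tn psi ft (x' a) w n \<partial>stream_space mu))
          \<le> ennreal (ft x) + (if x' a = 0 then 0 else ennreal (AA * x' a + BB))"
        using nonneg
      proof eventually_elim
        case (elim a)
        have "psi x \<le> x" unfolding psi_def using phi1[OF x] x by simp
        hence "x' a \<ge> 0" unfolding x'_def using elim by simp
        thus ?case using Suc.IH by (auto intro: add_left_mono)
      qed
    qed
    also have "\<dots> = ennreal (ft x) + (\<integral>\<^sup>+a. (if x' a = 0 then 0 else ennreal (AA * x' a + BB)) \<partial>mu)"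
    proof -
      have "(\<integral>\<^sup>+a. ennreal (ft x) + (if x' a = 0 then 0 else ennreal (AA * x' a + BB)) \<partial>mu)
          = (\<integral>\<^sup>+a. ennreal (ft x) \<partial>mu) + (\<integral>\<^sup>+a. (if x' a = 0 then 0 else ennreal (AA * x' a + BB)) \<partial>mu)"
      proof (rule nn_integral_add)
        show "(\<lambda>a. if x' a = 0 then 0 else ennreal (AA * x' a + BB)) \<in> borel_measurable mu"
          unfolding x'_def measurable_cong_sets[OF sets_mu refl] by measurable
      qed auto
      thus ?thesis by (simp add: emeasure_space_1)
    qed
    also have "\<dots> \<le> ennreal (AA*x + BB)"
      using drift[OF x] unfolding x'_def .
    finally show "(\<integral>\<^sup>+w. Tn psi ft x w (Suc n) \<partial>stream_space mu) \<le> ennreal (AA*x + BB)" .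
  qed
qed

lemma main:
  assumes x: "x \<ge> 0"
  shows "(\<integral>\<^sup>+ w. (\<Sum>t. if enat t < tau0 phi x w
                         then ennreal (bellman_err mu (Xpath phi x w t)) else 0)
              \<partial>stream_space mu) \<le> ennreal (AA * x + BB)"
proof -
  have pm: "Measurable.pred mu (\<lambda>a. 0 \<le> a)"
    unfolding measurable_cong_sets[OF sets_mu refl] by measurable
  have "AE w in stream_space mu. stream_all (\<lambda>a. 0 \<le> a) w"
    by (rule AE_stream_all[OF pm nonneg])
  hence good: "AE w in stream_space mu. \<forall>n. 0 \<le> w !! n"
    by (simp only: stream_all_def)
  have "(\<integral>\<^sup>+ w. (\<Sum>t. if enat t < tau0 phi x w
                         then ennreal (bellman_err mu (Xpath phi x w t)) else 0) \<partial>stream_space mu)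
      \<le> (\<integral>\<^sup>+ w. (\<Sum>t. if alive psi x w t then ennreal (ft (Xpath psi x w t)) else 0) \<partial>stream_space mu)"
  proof (rule nn_integral_mono_AE)
    show "AE w in stream_space mu. (\<Sum>t. if enat t < tau0 phi x w
                         then ennreal (bellman_err mu (Xpath phi x w t)) else 0)
        \<le> (\<Sum>t. if alive psi x w t then ennreal (ft (Xpath psi x w t)) else 0)"
      using good
    proof eventually_elim
      case (elim w)
      show ?case
      proof (rule suminf_le)
        fix t
        have gp: "Xpath phi x w t = Xpath psi x w t" "0 \<le> Xpath psi x w t"
          using good_path[OF x elim] by auto
        have "bellman_err mu (Xpath psi x w t) \<le> ft (Xpath psi x w t)"
          unfolding ft_def by (rule f_upper[OF gp(2)])
        thus "(if enat t < tau0 phi x w then ennreal (bellman_err mu (Xpath phi x w t)) else 0)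
            \<le> (if alive psi x w t then ennreal (ft (Xpath psi x w t)) else 0)"
          unfolding tau_eq[OF x elim] tau_alive gp(1) by (auto intro: ennreal_leI)
      qed (rule summableI)+
    qed
  qed
  also have "\<dots> = (\<integral>\<^sup>+ w. (SUP n. Tn psi ft x w n) \<partial>stream_space mu)"
    unfolding Tn_def by (simp add: suminf_eq_SUP)
  also have "\<dots> = (SUP n. \<integral>\<^sup>+ w. Tn psi ft x w n \<partial>stream_space mu)"
  proof (rule nn_integral_monotone_convergence_SUP)
    show "incseq (\<lambda>n w. Tn psi ft x w n)"
      unfolding incseq_def le_fun_def Tn_def
      by (auto intro!: sum_mono2)
  qed measurable
  also have "\<dots> \<le> ennreal (AA * x + BB)"
    using Gn x by (intro SUP_least) auto
  finally show ?thesis .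
qed

end



theorem lemma3:
  fixes mu :: "real measure" and N :: real and phi :: "real \<Rightarrow> real"
  assumes prob: "prob_space mu"
    and sets_mu: "sets mu = sets borel"
    and nonneg: "AE a in mu. 0 \<le> a"
    and Npos: "N > 0"
    and bounded: "AE a in mu. a < N"
    and atom0: "measure mu {0} > 0"
    and integ: "integrable mu (\<lambda>a. a)"
    and mean_pos: "arr_mean mu > 0"
    and myopic: "\<And>x. x \<ge> 0 \<Longrightarrow>
        0 \<le> phi x \<and> phi x \<le> x \<and> bellman_obj mu x (phi x) = bellman_err mu x"
  shows "\<exists>b1 b2 :: real. \<forall>x \<ge> 0.
           (\<integral>\<^sup>+ w. (\<Sum>t. if enat t < tau0 phi x w
                         then ennreal (bellman_err mu (Xpath phi x w t)) else 0)
              \<partial>stream_space mu) \<le> ennreal (b1 * x + b2)"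
proof -
  have ss: "SS mu N"
    by (rule SS.intro[OF prob], rule SS_axioms.intro) (rule sets_mu nonneg Npos bounded integ mean_pos)+
  have sp: "SP mu N phi"
    by (rule SP.intro[OF ss], rule SP_axioms.intro, rule myopic)
  have sq: "SQ mu N phi"
    by (rule SQ.intro[OF sp], rule SQ_axioms.intro, rule atom0)
  interpret SQ mu N phi by (rule sq)
  show ?thesis using main by blast
qed

end
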